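(* Let $A,B\subseteq\mathbb{R}^n$ be finite (Euclidean metric), $\beta>0$ and $\delta>d_P(A,B)$. For all $r>0$ and $k>\delta$, $$\mathrm{DCr}^\beta_{r,k}(A)\subseteq\mathrm{DCr}^\beta_{r',k-\delta}(B)\quad\text{and}\quad\mathrm{DCr}^\beta_{r,k}(B)\subseteq\mathrm{DCr}^\beta_{r',k-\delta}(A),$$ where $r'=\max\{1,2\beta\}\big((1+\beta^{-1})r+\delta\big)$.
   Context: $d$ Euclidean, $\bar B_d(x,r)=\{y:d(x,y)\le r\}$. For finite $A$, $k>0$, $x\in\mathbb{R}^n$, $\mathrm{core}^A_k(x)$ is the distance from $x$ to its $\lceil k\rceil$-th nearest neighbor in $A$ (each point of $A$ counted once, $x$ itself counting if $x\in A$); equivalently $\min\{r\ge0:|\bar B_d(x,r)\cap A|\ge k\}$, and $\infty$ if $k>|A|$. For $\beta>0$: $\Lambda^\beta_k(a,x)=\max\{\beta\,\mathrm{core}^A_k(a),d(a,x)\}$, $B^\beta_{r,k}(a)=\{x:\Lambda^\beta_k(a,x)\le r\}$, $\mathrm{Vor}_A(a)=\{x:d(a,x)\le d(a',x)\ \forall a'\in A\}$, and $\mathrm{DCr}^\beta_{r,k}(A)=\bigcup_{a\in A}\big(B^\beta_{r,k}(a)\cap\mathrm{Vor}_A(a)\big)$ (similarly for $B$). For $S\subseteq\mathbb{R}^n$, $\delta\ge0$: $S^\delta=\bigcup_{s\in S}\bar B_d(s,\delta)$. Counting Prohorov distance: $d_P(A,B)=\sup_{S\text{ closed}}\inf\{\delta\ge0:|S\cap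 A|\le|S^\delta\cap B|+\delta\text{ and }|S\cap B|\le|S^\delta\cap A|+\delta\}$. *)

theory Defs
  imports "HOL-Analysis.Analysis"
begin

text \<open>core^A_k(x): smallest radius r >= 0 such that the closed ball of radius r around x
  contains at least k points of A; infinity if no such radius exists (i.e. k > |A|).\<close>
definition core :: "'a::euclidean_space set \<Rightarrow> real \<Rightarrow> 'a \<Rightarrow> ereal" where
  "core A k x = Inf {ereal r | r. r \<ge> 0 \<and> real (card (cball x r \<inter> A)) \<ge> k}"

definition Lambda :: "real \<Rightarrow> 'a::euclidean_space set \<Rightarrow> real \<Rightarrow> 'a \<Rightarrow> 'a \<Rightarrow> ereal" where
  "Lambda \<beta> A k a x = max (ereal \<beta> * core A k a) (ereal (dist a x))"

definition Bset :: "real \<Rightarrow> real \<Rightarrow> real \<Rightarrow> 'a::euclidean_space set \<Rightarrow> 'a \<Rightarrow> 'a set" where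
  "Bset \<beta> r k A a = {x. Lambda \<beta> A k a x \<le> ereal r}"

definition Vor :: "'a::euclidean_space set \<Rightarrow> 'a \<Rightarrow> 'a set" where
  "Vor A a = {x. \<forall>a'\<in>A. dist a x \<le> dist a' x}"

definition DCr :: "real \<Rightarrow> real \<Rightarrow> real \<Rightarrow> 'a::euclidean_space set \<Rightarrow> 'a set" where
  "DCr \<beta> r k A = (\<Union>a\<in>A. Bset \<beta> r k A a \<inter> Vor A a)"

definition thicken :: "'a::euclidean_space set \<Rightarrow> real \<Rightarrow> 'a set" where
  "thicken S \<delta> = (\<Union>s\<in>S. cball s \<delta>)"

definition prohorov :: "'a::euclidean_space set \<Rightarrow> 'a set \<Rightarrow> real" where
  "prohorov A B = (SUP S\<in>{S. closed S}.
     Inf {\<delta>::real. \<delta> \<ge> 0 \<and> real (card (S \<inter> A)) \<le> real (card (thicken S \<delta> \<inter> B)) + \<delta>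
                     \<and> real (card (S \<inter> B)) \<le> real (card (thicken S \<delta> \<inter> A)) + \<delta>})"

end

theory Submission
  imports Defs
begin

lemma thicken_mono: "d1 \<le> d2 \<Longrightarrow> thicken S d1 \<subseteq> thicken S d2"
  unfolding thicken_def by auto

lemma prohorov_cond:
  fixes A B :: "'a::euclidean_space set"
  assumes fA: "finite A" and fB: "finite B" and d: "\<delta> > prohorov A B" and S: "closed S"
  shows "real (card (S \<inter> A)) \<le> real (card (thicken S \<delta> \<inter> B)) + \<delta>
       \<and> real (card (S \<inter> B)) \<le> real (card (thicken S \<delta> \<inter> A)) + \<delta> \<and> \<delta> \<ge> 0"
proof -
  define D where "D = (\<lambda>S. {\<delta>::real. \<delta> \<ge> 0 \<and> real (card (S \<inter> A)) \<le> real (card (thicken S \<delta> \<inter> B)) + \<delta>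
                     \<and> real (card (S \<inter> B)) \<le> real (card (thicken S \<delta> \<inter> A)) + \<delta>})"
  have mem: "real (card A) + real (card B) \<in> D S'" for S'
  proof -
    have "card (S' \<inter> A) \<le> card A" "card (S' \<inter> B) \<le> card B"
      using fA fB by (auto intro: card_mono)
    then show ?thesis unfolding D_def by auto
  qed
  have bdd: "bdd_below (D S')" for S' unfolding D_def by (auto intro: bdd_belowI[where m=0])
  have le: "Inf (D S') \<le> real (card A) + real (card B)" for S'
    using mem bdd by (rule cInf_lower)
  have nn: "Inf (D S') \<ge> 0" for S'
    using mem[of S'] by (intro cInf_greatest) (auto simp: D_def)
  have "bdd_above ((\<lambda>S. Inf (D S)) ` {S. closed S})"
    by (rule bdd_aboveI[where M="real (card A) + real (card B)"]) (use le in auto)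
  moreover have "prohorov A B = (SUP S\<in>{S. closed S}. Inf (D S))"
    unfolding prohorov_def D_def by simp
  ultimately have "Inf (D S) \<le> prohorov A B"
    using S by (auto intro: cSUP_upper)
  with d have "Inf (D S) < \<delta>" by linarith
  then obtain d' where d': "d' \<in> D S" "d' < \<delta>"
    using cInf_lessD[of "D S" \<delta>] mem by blast
  have c1: "card (thicken S d' \<inter> B) \<le> card (thicken S \<delta> \<inter> B)"
    using fB thicken_mono[of d' \<delta> S] d'(2) by (intro card_mono) auto
  have c2: "card (thicken S d' \<inter> A) \<le> card (thicken S \<delta> \<inter> A)"
    using fA thicken_mono[of d' \<delta> S] d'(2) by (intro card_mono) auto
  show ?thesis using d' c1 c2 unfolding D_def by auto
qed

lemma core_le:
  fixes A :: "'a::euclidean_space set"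
  assumes "r \<ge> 0" "real (card (cball x r \<inter> A)) \<ge> k"
  shows "core A k x \<le> ereal r"
  unfolding core_def using assms by (intro Inf_lower) auto

lemma one_dir:
  fixes A B :: "'a::euclidean_space set" and \<beta> \<delta> r k :: real
  assumes fA: "finite A" and fB: "finite B" and b0: "\<beta> > 0" and d0: "\<delta> \<ge> 0"
    and r0: "r > 0" and kd: "k > \<delta>"
    and cond: "\<And>S. closed S \<Longrightarrow> real (card (S \<inter> A)) \<le> real (card (thicken S \<delta> \<inter> B)) + \<delta>"
  shows "DCr \<beta> r k A \<subseteq> DCr \<beta> (max 1 (2 * \<beta>) * ((1 + 1 / \<beta>) * r + \<delta>)) (k - \<delta>) B"
proof
  fix x assume "x \<in> DCr \<beta> r k A"
  then obtain a where aA: "a \<in> A" and L: "Lambda \<beta> A k a x \<le> ereal r"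
    unfolding DCr_def Bset_def by auto
  define R where "R = (1 + 1 / \<beta>) * r + \<delta>"
  have dax: "dist a x \<le> r" using L unfolding Lambda_def by auto
  have bc: "ereal \<beta> * core A k a \<le> ereal r" using L unfolding Lambda_def by auto
  have corele: "core A k a \<le> ereal (r / \<beta>)"
  proof (cases "core A k a")
    case (real c)
    then have "\<beta> * c \<le> r" using bc by simp
    then have "c \<le> r / \<beta>" using b0 by (simp add: field_simps)
    then show ?thesis using real by simp
  next
    case PInf then show ?thesis using bc b0 by simp
  next
    case MInf then show ?thesis by simp
  qed
  have C: "\<exists>\<rho>. 0 \<le> \<rho> \<and> \<rho> < r / \<beta> + e \<and> real (card (cball a (\<rho> + \<delta>) \<inter> B)) \<ge> k - \<delta>"
    if e: "e > 0" for e
  proof -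
    have "ereal (r / \<beta>) < ereal (r / \<beta> + e)" using e by simp
    then have "core A k a < ereal (r / \<beta> + e)" using corele by (rule le_less_trans[rotated])
    then obtain y where y: "y \<in> {ereal r | r. r \<ge> 0 \<and> real (card (cball a r \<inter> A)) \<ge> k}"
      "y < ereal (r / \<beta> + e)"
      unfolding core_def using Inf_less_iff by blast
    then obtain \<rho> where rho: "y = ereal \<rho>" "\<rho> \<ge> 0" "real (card (cball a \<rho> \<inter> A)) \<ge> k" by auto
    have "k - \<delta> \<le> real (card (thicken (cball a \<rho>) \<delta> \<inter> B))"
      using cond[of "cball a \<rho>"] rho by auto
    also have "thicken (cball a \<rho>) \<delta> \<subseteq> cball a (\<rho> + \<delta>)"
    proof
      fix z assume "z \<in> thicken (cball a \<rho>) \<delta>"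
      then obtain s where "dist a s \<le> \<rho>" "dist s z \<le> \<delta>" unfolding thicken_def by auto
      moreover have "dist a z \<le> dist a s + dist s z" by (rule dist_triangle)
      ultimately show "z \<in> cball a (\<rho> + \<delta>)" by simp
    qed
    then have "card (thicken (cball a \<rho>) \<delta> \<inter> B) \<le> card (cball a (\<rho> + \<delta>) \<inter> B)"
      using fB by (intro card_mono) auto
    finally show ?thesis using rho y by (intro exI[of _ \<rho>]) auto
  qed
  from C[of 1] obtain \<rho>1 where "real (card (cball a (\<rho>1 + \<delta>) \<inter> B)) \<ge> k - \<delta>" by auto
  with kd have "cball a (\<rho>1 + \<delta>) \<inter> B \<noteq> {}" by auto
  then have Bne: "B \<noteq> {}" by auto
  define m where "m = Min ((\<lambda>b. dist b x) ` B)"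
  have "m \<in> (\<lambda>b. dist b x) ` B" unfolding m_def using fB Bne by (intro Min_in) auto
  then obtain b where bB: "b \<in> B" and bm: "dist b x = m" by auto
  have bmin: "dist b x \<le> dist b' x" if "b' \<in> B" for b'
    using bm fB that unfolding m_def by (simp add: Min_le)
  have dbx_e: "dist b x \<le> R + e" if e: "e > 0" for e
  proof -
    obtain \<rho> where rho: "0 \<le> \<rho>" "\<rho> < r / \<beta> + e" "real (card (cball a (\<rho> + \<delta>) \<inter> B)) \<ge> k - \<delta>"
      using C[OF e] by auto
    then have "cball a (\<rho> + \<delta>) \<inter> B \<noteq> {}" using kd by auto
    then obtain q where q: "q \<in> B" "dist a q \<le> \<rho> + \<delta>" by auto
    have "dist b x \<le> dist q x" using bmin q by auto
    also have "\<dots> \<le> dist q a + dist a x" by (rule dist_triangle)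
    also have "\<dots> \<le> r / \<beta> + e + \<delta> + r" using q rho dax by (simp add: dist_commute)
    also have "\<dots> = R + e" using b0 by (simp add: R_def field_simps)
    finally show ?thesis .
  qed
  have dbx: "dist b x \<le> R" using dbx_e by (rule field_le_epsilon)
  have core_e: "core B (k - \<delta>) b \<le> ereal (2 * R) + ereal e" if e: "e > 0" for e
  proof -
    obtain \<rho> where rho: "0 \<le> \<rho>" "\<rho> < r / \<beta> + e" "real (card (cball a (\<rho> + \<delta>) \<inter> B)) \<ge> k - \<delta>"
      using C[OF e] by auto
    have sub: "cball a (\<rho> + \<delta>) \<subseteq> cball b (\<rho> + \<delta> + dist a b)"
    proof
      fix z assume "z \<in> cball a (\<rho> + \<delta>)"
      moreover have "dist b z \<le> dist b a + dist a z" by (rule dist_triangle)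
      ultimately show "z \<in> cball b (\<rho> + \<delta> + dist a b)" by (simp add: dist_commute)
    qed
    have "card (cball a (\<rho> + \<delta>) \<inter> B) \<le> card (cball b (\<rho> + \<delta> + dist a b) \<inter> B)"
      using fB sub by (intro card_mono) auto
    then have "core B (k - \<delta>) b \<le> ereal (\<rho> + \<delta> + dist a b)"
      using rho d0 by (intro core_le) auto
    also have "dist a b \<le> dist a x + dist b x" by (rule dist_triangle2)
    then have "\<rho> + \<delta> + dist a b \<le> r / \<beta> + e + \<delta> + r + R"
      using rho dax dbx by simp
    also have "\<dots> = 2 * R + e" using b0 by (simp add: R_def field_simps)
    finally show ?thesis by simp
  qed
  have core2: "core B (k - \<delta>) b \<le> ereal (2 * R)" using core_e by (rule ereal_le_epsilon2)
  have Rnn: "R \<ge> 0" using b0 r0 d0 by (simp add: R_def)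
  have "ereal \<beta> * core B (k - \<delta>) b \<le> ereal \<beta> * ereal (2 * R)"
    using core2 b0 by (intro ereal_mult_left_mono) auto
  also have "\<dots> = ereal (2 * \<beta> * R)" by simp
  also have "2 * \<beta> * R \<le> max 1 (2 * \<beta>) * R" using Rnn by (intro mult_right_mono) auto
  finally have t1: "ereal \<beta> * core B (k - \<delta>) b \<le> ereal (max 1 (2 * \<beta>) * R)" by simp
  have "dist b x \<le> max 1 (2 * \<beta>) * R"
    using dbx Rnn mult_right_mono[of 1 "max 1 (2 * \<beta>)" R] by auto
  with t1 have "Lambda \<beta> B (k - \<delta>) b x \<le> ereal (max 1 (2 * \<beta>) * R)"
    unfolding Lambda_def by auto
  moreover have "x \<in> Vor B b" unfolding Vor_def using bmin by auto
  ultimately show "x \<in> DCr \<beta> (max 1 (2 * \<beta>) * ((1 + 1 / \<beta>) * r + \<delta>)) (k - \<delta>) B"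
    unfolding DCr_def Bset_def R_def using bB by auto
qed

theorem mainTheorem8:
  fixes A B :: "'a::euclidean_space set" and \<beta> \<delta> r k :: real
  assumes "finite A" "finite B" "\<beta> > 0" "\<delta> > prohorov A B"
    and "r > 0" "k > \<delta>"
  shows "DCr \<beta> r k A \<subseteq> DCr \<beta> (max 1 (2 * \<beta>) * ((1 + 1 / \<beta>) * r + \<delta>)) (k - \<delta>) B
       \<and> DCr \<beta> r k B \<subseteq> DCr \<beta> (max 1 (2 * \<beta>) * ((1 + 1 / \<beta>) * r + \<delta>)) (k - \<delta>) A"
proof -
  have d0: "\<delta> \<ge> 0" using prohorov_cond[OF assms(1,2,4), of "{}"] by simp
  show ?thesis
    using one_dir[OF assms(1,2,3) d0 assms(5,6)] one_dir[OF assms(2,1,3) d0 assms(5,6)]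
      prohorov_cond[OF assms(1,2,4)] by blast
qed

end
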